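(* Let $H$ be an abelian group with an alternating $\mathbb{Z}$-bilinear form $\langle-,-\rangle\neq0$, and let $z\in\ker\mu$. Let $\omega\in C^3(\mathbb{Q}[H])_{(z)}$ be the cochain with $\omega([u],[v],[w])=\langle u,v\rangle$ if $u+v+w=z$ and $\omega([u],[v],[w])=0$ otherwise (for $u,v,w\in H$); $\omega$ is a 3-cocycle, and so is its restriction to $\mathbb{Q}[H^{(1)}]$. If $z$ is a torsion element (i.e. $nz=0$ for some $n\in\mathbb{Z}\setminus\{0\}$), then $[\omega]\neq0$ in $H^3(\mathbb{Q}[H])_{(z)}$. If $z$ is not a torsion element, then the class of the restriction of $\omega$ is $0$ in $H^3(\mathbb{Q}[H^{(1)}])_{(z)}$.
   Context: $\mu:H\to\mathrm{Hom}_{\mathbb{Z}}(H,\mathbb{Z})$, $\mu(x)(y)=\langle x,y\rangle$; $H^{(1)}:=H\setminus\ker\mu$. $\mathbb{Q}[S]$ ($S\subset H$) is the $\mathbb{Q}$-vector space with basis symbols $[x]$, $x\in S$; $\mathbb{Q}[H]$ is a Lie algebra via $[[x],[y]]=\langle x,y\rangle[x+y]$ and $\mathbb{Q}[H^{(1)}]$ is a Lie subalgebra. For a Lie algebra $\mathfrak g$, $C^p(\mathfrak g)=\mathrm{Hom}_{\mathbb{Q}}(\bigwedge^p\mathfrak g,\mathbb{Q})$ is the Chevalley–Eilenberg cochain complex with trivial coefficients, with $d\eta(x_1,\dots,x_{p+1})=\sum_{i<j}(-1)^{i+j}\eta([x_i,x_j],x_1,\dots,\widehat{x_i},\dots,\widehat{x_j},\dots,x_{p+1})$.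 For $S\in\{H,H^{(1)}\}$, $p>0$, $C^p(\mathbb{Q}[S])_{(z)}$ is the subcomplex of cochains vanishing on $([u_1],\dots,[u_p])$, $u_i\in S$, whenever $u_1+\cdots+u_p\neq z$, and $H^p(\mathbb{Q}[S])_{(z)}$ is its cohomology. *)

theory Defs
  imports Complex_Main
begin

definition bilinear_form :: "('a::ab_group_add \<Rightarrow> 'a \<Rightarrow> int) \<Rightarrow> bool" where
  "bilinear_form B \<longleftrightarrow> (\<forall>x y w. B (x + y) w = B x w + B y w) \<and> (\<forall>x y w. B x (y + w) = B x y + B x w)"

definition alternating_form :: "('a::ab_group_add \<Rightarrow> 'a \<Rightarrow> int) \<Rightarrow> bool" where
  "alternating_form B \<longleftrightarrow> (\<forall>x. B x x = 0)"

definition ker_mu :: "('a::ab_group_add \<Rightarrow> 'a \<Rightarrow> int) \<Rightarrow> 'a set" where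
  "ker_mu B = {x. \<forall>y. B x y = 0}"

definition H1 :: "('a::ab_group_add \<Rightarrow> 'a \<Rightarrow> int) \<Rightarrow> 'a set" where
  "H1 B = UNIV - ker_mu B"

text \<open>Torsion: n z = 0 for some nonzero integer n (equivalently some positive n).\<close>
definition torsion_elem :: "'a::ab_group_add \<Rightarrow> bool" where
  "torsion_elem z \<longleftrightarrow> (\<exists>n::nat. n > 0 \<and> (\<Sum>i<n. z) = 0)"

text \<open>A p-cochain on Q[S] is a linear map from the p-th exterior power of Q[S] to Q;
  it is determined by its (arbitrary, alternating) values on basis tuples ([u_1],...,[u_p]), u_i in S.
  We represent it by a function on lists; only values on lists of length p with entries in S matter.\<close>

definition list_swap :: "'b list \<Rightarrow> nat \<Rightarrow> nat \<Rightarrow> 'b list" where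
  "list_swap us i j = us[i := us ! j, j := us ! i]"

definition cochain_on :: "'a set \<Rightarrow> nat \<Rightarrow> ('a list \<Rightarrow> rat) \<Rightarrow> bool" where
  "cochain_on S p \<eta> \<longleftrightarrow>
     (\<forall>us. length us = p \<and> set us \<subseteq> S \<longrightarrow>
        (\<forall>i j. i < j \<and> j < p \<longrightarrow> \<eta> (list_swap us i j) = - \<eta> us))"

definition graded_cochain :: "'a::ab_group_add set \<Rightarrow> nat \<Rightarrow> 'a \<Rightarrow> ('a list \<Rightarrow> rat) \<Rightarrow> bool" where
  "graded_cochain S p z \<eta> \<longleftrightarrow> cochain_on S p \<eta> \<and>
     (\<forall>us. length us = p \<and> set us \<subseteq> S \<and> sum_list us \<noteq> z \<longrightarrow> \<eta> us = 0)"

definition del2 :: "'b list \<Rightarrow> nat \<Rightarrow> nat \<Rightarrow> 'b list" where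
  "del2 us i j = map (nth us) (filter (\<lambda>k. k \<noteq> i \<and> k \<noteq> j) [0..<length us])"

text \<open>Chevalley-Eilenberg differential evaluated on basis elements, using
  [[x],[y]] = <x,y>[x+y] (indices 0-based; the sign (-1)^(i+j) is unchanged).\<close>
definition CE_d :: "('a::ab_group_add \<Rightarrow> 'a \<Rightarrow> int) \<Rightarrow> ('a list \<Rightarrow> rat) \<Rightarrow> 'a list \<Rightarrow> rat" where
  "CE_d B \<eta> us = (\<Sum>i<length us. \<Sum>j\<in>{i<..<length us}.
      (-1) ^ (i + j) * of_int (B (us ! i) (us ! j)) * \<eta> ((us ! i + us ! j) # del2 us i j))"

definition is_cocycle :: "('a::ab_group_add \<Rightarrow> 'a \<Rightarrow> int) \<Rightarrow> 'a set \<Rightarrow> nat \<Rightarrow> ('a list \<Rightarrow> rat) \<Rightarrow> bool" where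
  "is_cocycle B S p \<omega> \<longleftrightarrow> (\<forall>us. length us = Suc p \<and> set us \<subseteq> S \<longrightarrow> CE_d B \<omega> us = 0)"

text \<open>The class of the p-cochain omega vanishes in H^p(Q[S])_(z) (p > 0):
  omega = d eta for some eta in C^(p-1)(Q[S])_(z).\<close>
definition is_coboundary :: "('a::ab_group_add \<Rightarrow> 'a \<Rightarrow> int) \<Rightarrow> 'a set \<Rightarrow> nat \<Rightarrow> 'a \<Rightarrow> ('a list \<Rightarrow> rat) \<Rightarrow> bool" where
  "is_coboundary B S p z \<omega> \<longleftrightarrow> (\<exists>\<eta>. graded_cochain S (p - 1) z \<eta> \<and>
      (\<forall>us. length us = p \<and> set us \<subseteq> S \<longrightarrow> CE_d B \<eta> us = \<omega> us))"

definition omega :: "('a::ab_group_add \<Rightarrow> 'a \<Rightarrow> int) \<Rightarrow> 'a \<Rightarrow> 'a list \<Rightarrow> rat" where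
  "omega B z us = (if sum_list us = z then of_int (B (us ! 0) (us ! 1)) else 0)"

end

theory Submission imports Defs begin


definition nmul :: "nat \<Rightarrow> 'a::ab_group_add \<Rightarrow> 'a" where
  "nmul n x = (\<Sum>i<n. x)"

lemma nmul_0[simp]: "nmul 0 x = 0" by (simp add: nmul_def)
lemma nmul_Suc: "nmul (Suc n) x = nmul n x + x" by (simp add: nmul_def)
lemma nmul_add: "nmul (a + b) x = nmul a x + nmul b x"
  by (induction b) (simp_all add: nmul_Suc add.assoc)
lemma nmul_plus: "nmul a (x + y) = nmul a x + nmul a y"
  by (simp add: nmul_def sum.distrib)
lemma nmul_diff: "nmul a (x - y) = nmul a x - nmul a y"
  by (simp add: nmul_def sum_subtractf)
lemma nmul_mult: "nmul (a * b) x = nmul a (nmul b x)"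
  by (induction a) (simp_all add: nmul_Suc nmul_add add.commute)

definition imul :: "int \<Rightarrow> 'a::ab_group_add \<Rightarrow> 'a" where
  "imul n x = nmul (nat n) x - nmul (nat (- n)) x"

lemma imul_nat_diff: "imul (int a - int b) x = nmul a x - nmul b x"
proof (cases "b \<le> a")
  case True
  then obtain c where c: "a = b + c" using le_Suc_ex by blast
  hence "int a - int b = int c" by simp
  thus ?thesis by (simp add: imul_def c nmul_add)
next
  case False
  then obtain c where c: "b = a + c" by (intro that[of "b - a"]) auto
  hence "int a - int b = - int c" by simp
  thus ?thesis by (simp add: imul_def c nmul_add)
qed

lemma int_split: "\<exists>a b. n = int a - int b"
  by (rule exI[of _ "nat n"], rule exI[of _ "nat (-n)"]) simp

lemma imul_add: "imul (m + n) x = imul m x + imul n x"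
proof -
  obtain a b where m: "m = int a - int b" using int_split by blast
  obtain c d where n: "n = int c - int d" using int_split by blast
  have "m + n = int (a + c) - int (b + d)" unfolding m n by simp
  hence "imul (m + n) x = nmul (a + c) x - nmul (b + d) x" by (simp only: imul_nat_diff)
  thus ?thesis by (simp add: m n imul_nat_diff nmul_add)
qed

lemma imul_plus: "imul n (x + y) = imul n x + imul n y"
  by (simp add: imul_def nmul_plus)

lemma imul_0[simp]: "imul 0 x = 0" by (simp add: imul_def)
lemma imul_1[simp]: "imul 1 x = x" by (simp add: imul_def nmul_def)
lemma imul_zero[simp]: "imul n 0 = 0" by (simp add: imul_def nmul_def)
lemma imul_uminus: "imul (- n) x = - imul n x" by (simp add: imul_def)

lemma imul_mult: "imul (m * n) x = imul m (imul n x)"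
proof -
  obtain a b where m: "m = int a - int b" using int_split by blast
  obtain c d where n: "n = int c - int d" using int_split by blast
  have "m * n = int (a*c + b*d) - int (a*d + b*c)" unfolding m n by (simp add: algebra_simps)
  hence "imul (m * n) x = nmul (a*c + b*d) x - nmul (a*d + b*c) x" by (simp only: imul_nat_diff)
  thus ?thesis by (simp add: m n imul_nat_diff nmul_add nmul_diff nmul_mult)
qed

lemma imul_nat: "imul (int n) x = nmul n x" by (simp add: imul_def)

definition PG :: "'a::ab_group_add \<Rightarrow> ('a \<times> rat) set \<Rightarrow> bool" where
  "PG z G \<longleftrightarrow> (\<forall>a p b q. (a,p) \<in> G \<and> (b,q) \<in> G \<longrightarrow> (a+b, p+q) \<in> G)
     \<and> (\<forall>a p. (a,p) \<in> G \<longrightarrow> (-a, -p) \<in> G) \<and> (0,0) \<in> G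
     \<and> (\<forall>r. (0,r) \<in> G \<longrightarrow> r = 0) \<and> (z,1) \<in> G"

lemma PG_add: "PG z G \<Longrightarrow> (a,p) \<in> G \<Longrightarrow> (b,q) \<in> G \<Longrightarrow> (a+b, p+q) \<in> G"
  unfolding PG_def by simp
lemma PG_neg: "PG z G \<Longrightarrow> (a,p) \<in> G \<Longrightarrow> (-a, -p) \<in> G"
  unfolding PG_def by simp
lemma PG_00: "PG z G \<Longrightarrow> (0,0) \<in> G"
  unfolding PG_def by simp
lemma PG_z: "PG z G \<Longrightarrow> (z,1) \<in> G"
  unfolding PG_def by simp
lemma PG_0r: "PG z G \<Longrightarrow> (0,r) \<in> G \<Longrightarrow> r = 0"
  unfolding PG_def by simp

lemma PG_nmul:
  assumes "PG z G" "(a,p) \<in> G" shows "(nmul n a, of_nat n * p) \<in> G"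
proof (induction n)
  case 0 thus ?case using PG_00[OF assms(1)] by simp
next
  case (Suc n)
  have "(nmul n a + a, of_nat n * p + p) \<in> G" using PG_add[OF assms(1) Suc assms(2)] .
  thus ?case by (simp add: nmul_Suc algebra_simps)
qed

lemma PG_imul:
  assumes "PG z G" "(a,p) \<in> G" shows "(imul n a, of_int n * p) \<in> G"
proof (cases "n \<ge> 0")
  case True
  then obtain k where "n = int k" using nonneg_int_cases by blast
  thus ?thesis using PG_nmul[OF assms] by (simp add: imul_nat)
next
  case False
  then obtain k where k: "n = - int k" by (intro that[of "nat (-n)"]) simp
  have "(nmul k a, of_nat k * p) \<in> G" using PG_nmul[OF assms] .
  hence "(- nmul k a, - (of_nat k * p)) \<in> G" using assms(1) by (rule PG_neg[rotated])
  thus ?thesis by (simp add: k imul_uminus imul_nat)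
qed

lemma PG_fun:
  assumes "PG z G" "(a,p) \<in> G" "(a,q) \<in> G" shows "p = q"
proof -
  have "(-a,-q) \<in> G" using PG_neg[OF assms(1,3)] .
  hence "(a + -a, p + -q) \<in> G" using PG_add[OF assms(1,2)] by blast
  hence "(0, p - q) \<in> G" by simp
  hence "p - q = 0" by (rule PG_0r[OF assms(1)])
  thus ?thesis by simp
qed

lemma exists_hom:
  fixes z :: "'a::ab_group_add"
  assumes nt: "\<not> torsion_elem z"
  shows "\<exists>\<phi>::'a \<Rightarrow> rat. (\<forall>x y. \<phi> (x + y) = \<phi> x + \<phi> y) \<and> \<phi> z = 1"
proof -
  define A where "A = {G. PG z G}"
  define G0 where "G0 = {(imul n z, of_int n :: rat) | n. True}"
  have nt': "imul n z = 0 \<Longrightarrow> n = 0" for n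
  proof (rule ccontr)
    assume h: "imul n z = 0" "n \<noteq> 0"
    obtain k where k: "k > 0" "n = int k \<or> n = - int k"
      using h(2) by (intro that[of "nat \<bar>n\<bar>"]) auto
    have "nmul k z = 0" using k h(1) by (auto simp: imul_nat imul_uminus)
    thus False using nt k(1) unfolding torsion_elem_def nmul_def by blast
  qed
  have G0P: "PG z G0" unfolding PG_def
  proof (intro conjI allI impI)
    show "(0, 0) \<in> G0" unfolding G0_def by (rule CollectI, rule exI[of _ 0]) simp
    show "(z, 1) \<in> G0" unfolding G0_def by (rule CollectI, rule exI[of _ 1]) simp
  next
    fix a p b q assume "(a, p) \<in> G0 \<and> (b, q) \<in> G0"
    then obtain n m where "a = imul n z" "p = of_int n" "b = imul m z" "q = of_int m"
      unfolding G0_def by blast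
    thus "(a + b, p + q) \<in> G0" unfolding G0_def
      by (intro CollectI exI[of _ "n+m"]) (simp add: imul_add)
  next
    fix a p assume "(a, p) \<in> G0"
    then obtain n where "a = imul n z" "p = of_int n" unfolding G0_def by blast
    thus "(- a, - p) \<in> G0" unfolding G0_def
      by (intro CollectI exI[of _ "-n"]) (simp add: imul_uminus)
  next
    fix r assume "(0, r) \<in> G0"
    then obtain n where "0 = imul n z" "r = of_int n" unfolding G0_def by blast
    thus "r = 0" using nt' by simp
  qed
  hence G0: "G0 \<in> A" unfolding A_def by simp
  have "\<forall>C\<in>chains A. \<exists>U\<in>A. \<forall>X\<in>C. X \<subseteq> U"
  proof
    fix C assume C: "C \<in> chains A"
    show "\<exists>U\<in>A. \<forall>X\<in>C. X \<subseteq> U"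
    proof (cases "C = {}")
      case True thus ?thesis using G0 by blast
    next
      case False
      have CA: "C \<subseteq> A" and ch: "\<And>X Y. X \<in> C \<Longrightarrow> Y \<in> C \<Longrightarrow> X \<subseteq> Y \<or> Y \<subseteq> X"
        using C unfolding chains_def chain_subset_def by auto
      have P: "\<And>X. X \<in> C \<Longrightarrow> PG z X" using CA unfolding A_def by auto
      obtain X0 where X0: "X0 \<in> C" using False by blast
      have "PG z (\<Union>C)" unfolding PG_def
      proof (intro conjI allI impI)
        fix a p b q assume "(a, p) \<in> \<Union> C \<and> (b, q) \<in> \<Union> C"
        then obtain X Y where XY: "X \<in> C" "Y \<in> C" "(a,p) \<in> X" "(b,q) \<in> Y" by blast
        show "(a + b, p + q) \<in> \<Union> C"
        proof (cases "X \<subseteq> Y")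
          case True thus ?thesis using XY PG_add[OF P[of Y]] by blast
        next
          case False hence "Y \<subseteq> X" using ch XY by blast
          thus ?thesis using XY PG_add[OF P[of X]] by blast
        qed
      next
        fix a p assume "(a, p) \<in> \<Union> C"
        thus "(- a, - p) \<in> \<Union> C" using P PG_neg by blast
      next
        show "(0, 0) \<in> \<Union> C" using PG_00[OF P[OF X0]] X0 by blast
      next
        show "(z, 1) \<in> \<Union> C" using PG_z[OF P[OF X0]] X0 by blast
      next
        fix r assume "(0, r) \<in> \<Union> C"
        thus "r = 0" using P PG_0r by blast
      qed
      thus ?thesis unfolding A_def by blast
    qed
  qed
  from Zorn_Lemma2[OF this] obtain M where M: "M \<in> A" and max: "\<And>X. X \<in> A \<Longrightarrow> M \<subseteq> X \<Longrightarrow> X = M"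
    by blast
  have PM: "PG z M" using M unfolding A_def by simp
  have total: "\<exists>r. (x,r) \<in> M" for x
  proof (rule ccontr)
    assume nx: "\<nexists>r. (x, r) \<in> M"
    define r where "r = (if \<exists>m q. m \<noteq> 0 \<and> (imul m x, q) \<in> M
       then (let (m,q) = SOME (m,q). m \<noteq> 0 \<and> (imul m x, q) \<in> M in q / of_int m) else 0)"
    define G where "G = {(a + imul n x, p + of_int n * r) | a p n. (a,p) \<in> M}"
    have key: "p + of_int n * r = 0" if h: "(a,p) \<in> M" "a + imul n x = 0" for a p n
    proof (cases "n = 0")
      case True
      hence "a = 0" using h by simp
      thus ?thesis using h PG_0r[OF PM] True by auto
    next
      case False
      have "imul n x = (a + imul n x) - a" by simp
      also have "\<dots> = - a" using h(2) by simp
      finally have ia: "imul n x = - a" .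
      have "(-a, -p) \<in> M" using PG_neg[OF PM h(1)] .
      hence nM: "(imul n x, -p) \<in> M" using ia by simp
      have ex: "\<exists>m q. m \<noteq> 0 \<and> (imul m x, q) \<in> M"
        by (intro exI[of _ n] exI[of _ "-p"]) (use nM False in simp)
      define mq0 where "mq0 = (SOME (m,q). m \<noteq> 0 \<and> (imul m x, q) \<in> M)"
      define m where "m = fst mq0"
      define q where "q = snd mq0"
      have "\<exists>mq. (\<lambda>(m,q). m \<noteq> 0 \<and> (imul m x, q) \<in> M) mq" using ex by auto
      hence "(\<lambda>(m,q). m \<noteq> 0 \<and> (imul m x, q) \<in> M) mq0" unfolding mq0_def by (rule someI_ex)
      hence mqp: "m \<noteq> 0" "(imul m x, q) \<in> M" unfolding m_def q_def by (auto simp: case_prod_beta)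
      have rdef: "r = q / of_int m" using ex unfolding r_def m_def q_def mq0_def
        by (simp add: case_prod_beta Let_def)
      have F1: "(imul m (imul n x), of_int m * (-p)) \<in> M" using PG_imul[OF PM nM] .
      have F2: "(imul n (imul m x), of_int n * q) \<in> M" using PG_imul[OF PM mqp(2)] .
      have E: "imul m (imul n x) = imul n (imul m x)"
        by (simp only: imul_mult[symmetric] mult.commute)
      have F1': "(imul n (imul m x), of_int m * (-p)) \<in> M" using F1 unfolding E .
      have "of_int m * (-p) = of_int n * q" by (rule PG_fun[OF PM F1' F2])
      note pq = this
      have rq: "r * of_int m = q" using rdef mqp(1) by simp
      have "(p + of_int n * r) * of_int m = p * of_int m + of_int n * (r * of_int m)"
        by (simp add: algebra_simps)
      also have "\<dots> = p * of_int m + of_int n * q" using rq by simp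
      also have "\<dots> = 0" using pq by (simp add: algebra_simps)
      finally have e1: "(p + of_int n * r) * of_int m = 0" .
      have "(of_int m :: rat) \<noteq> 0" using mqp(1) by simp
      thus ?thesis using e1 by simp
    qed
    have PGG: "PG z G" unfolding PG_def
    proof (intro conjI allI impI)
      fix a p b q assume "(a, p) \<in> G \<and> (b, q) \<in> G"
      then obtain a1 p1 n1 a2 p2 n2 where e: "a = a1 + imul n1 x" "p = p1 + of_int n1 * r" "(a1,p1) \<in> M"
        "b = a2 + imul n2 x" "q = p2 + of_int n2 * r" "(a2,p2) \<in> M" unfolding G_def by blast
      have "(a1 + a2, p1 + p2) \<in> M" using PG_add[OF PM e(3) e(6)] .
      moreover have "a + b = (a1 + a2) + imul (n1 + n2) x" using e by (simp add: imul_add algebra_simps)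
      moreover have "p + q = (p1 + p2) + of_int (n1 + n2) * r" using e by (simp add: algebra_simps)
      ultimately show "(a + b, p + q) \<in> G" unfolding G_def by blast
    next
      fix a p assume "(a, p) \<in> G"
      then obtain a1 p1 n1 where e: "a = a1 + imul n1 x" "p = p1 + of_int n1 * r" "(a1,p1) \<in> M"
        unfolding G_def by blast
      have "(- a1, - p1) \<in> M" using PG_neg[OF PM e(3)] .
      moreover have "- a = (- a1) + imul (- n1) x" using e by (simp add: imul_uminus)
      moreover have "- p = (- p1) + of_int (- n1) * r" using e by simp
      ultimately show "(- a, - p) \<in> G" unfolding G_def by blast
    next
      have "(0,0) \<in> M" using PG_00[OF PM] .
      thus "(0, 0) \<in> G" unfolding G_def by force
    next
      have "(z,1) \<in> M" using PG_z[OF PM] .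
      thus "(z, 1) \<in> G" unfolding G_def by force
    next
      fix s assume "(0, s) \<in> G"
      then obtain a1 p1 n1 where e: "0 = a1 + imul n1 x" "s = p1 + of_int n1 * r" "(a1,p1) \<in> M"
        unfolding G_def by blast
      thus "s = 0" using key by simp
    qed
    have "M \<subseteq> G" unfolding G_def by (force intro: exI[of _ 0])
    hence "G = M" using max PGG unfolding A_def by blast
    moreover have "(x, r) \<in> G" using PG_00[OF PM] unfolding G_def
      by (intro CollectI exI[of _ 0] exI[of _ 0] exI[of _ 1]) simp
    ultimately show False using nx by blast
  qed
  define \<phi> where "\<phi> x = (SOME r. (x,r) \<in> M)" for x
  have phiM: "(x, \<phi> x) \<in> M" for x using total[of x] unfolding \<phi>_def by (rule someI_ex)
  have "\<phi> (x + y) = \<phi> x + \<phi> y" for x y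
  proof -
    have "(x + y, \<phi> x + \<phi> y) \<in> M" using PG_add[OF PM phiM phiM] .
    thus ?thesis using PG_fun[OF PM] phiM by blast
  qed
  moreover have "\<phi> z = 1" using PG_fun[OF PM phiM PG_z[OF PM]] .
  ultimately show ?thesis by blast
qed


lemma CEexp: "CE_d B \<eta> us = (\<Sum>i\<leftarrow>[0..<length us]. \<Sum>j\<leftarrow>[Suc i..<length us].
      (-1) ^ (i + j) * of_int (B (us ! i) (us ! j)) * \<eta> ((us ! i + us ! j) # del2 us i j))"
  unfolding CE_d_def atLeast_upt greaterThanLessThan_upt
  by (simp only: sum.distinct_set_conv_list distinct_upt)
lemma CE3: "CE_d B \<eta> [a,b,c] = - of_int (B a b) * \<eta> [a+b, c] + of_int (B a c) * \<eta> [a+c, b] - of_int (B b c) * \<eta> [b+c, a]"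
  by (simp add: CEexp del2_def eval_nat_numeral upt_rec)
lemma CE4: "CE_d B \<eta> [a,b,c,d] = - of_int (B a b) * \<eta> [a+b, c, d] + of_int (B a c) * \<eta> [a+c, b, d]
   - of_int (B a d) * \<eta> [a+d, b, c] - of_int (B b c) * \<eta> [b+c, a, d] + of_int (B b d) * \<eta> [b+d, a, c]
   - of_int (B c d) * \<eta> [c+d, a, b]"
  by (simp add: CEexp del2_def eval_nat_numeral upt_rec)


lemma bil:
  assumes "bilinear_form B"
  shows bil_ladd: "B (x+y) w = B x w + B y w" and bil_radd: "B x (y+w) = B x y + B x w"
    and bil_l0: "B 0 w = 0" and bil_r0: "B x 0 = 0"
    and bil_lneg: "B (-x) w = - B x w" and bil_rneg: "B x (-y) = - B x y"
    and bil_lsub: "B (x - y) w = B x w - B y w" and bil_rsub: "B x (y - w) = B x y - B x w"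
proof -
  have la: "\<And>x y w. B (x+y) w = B x w + B y w" and ra: "\<And>x y w. B x (y+w) = B x y + B x w"
    using assms unfolding bilinear_form_def by auto
  show "B (x+y) w = B x w + B y w" "B x (y+w) = B x y + B x w" by (rule la, rule ra)
  have l0: "B 0 w = 0" for w using la[of 0 0 w] by simp
  have r0: "B x 0 = 0" for x using ra[of x 0 0] by simp
  show "B 0 w = 0" "B x 0 = 0" by (rule l0, rule r0)
  have ln: "B (-x) w = - B x w" for x w using la[of x "-x" w] l0 by simp
  have rn: "B x (-y) = - B x y" for x y using ra[of x y "-y"] r0 by simp
  show "B (-x) w = - B x w" "B x (-y) = - B x y" by (rule ln, rule rn)
  show "B (x - y) w = B x w - B y w" using la[of x "-y" w] ln by simp
  show "B x (y - w) = B x y - B x w" using ra[of x y "-w"] rn by simp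
qed

lemma anti:
  assumes "bilinear_form B" "alternating_form B"
  shows "B y x = - B x y"
proof -
  have "B (x+y) (x+y) = 0" "B x x = 0" "B y y = 0" using assms(2) unfolding alternating_form_def by auto
  thus ?thesis using bil_ladd[OF assms(1)] bil_radd[OF assms(1)] by (simp add: algebra_simps)
qed

lemma len2: "length us = 2 \<Longrightarrow> \<exists>a b. us = [a,b]"
  by (auto simp: numeral_eq_Suc length_Suc_conv)
lemma len3: "length us = 3 \<Longrightarrow> \<exists>a b c. us = [a,b,c]"
  by (auto simp: numeral_eq_Suc length_Suc_conv)
lemma len4: "length us = Suc 3 \<Longrightarrow> \<exists>a b c d. us = [a,b,c,d]"
  by (auto simp: numeral_eq_Suc length_Suc_conv)

lemma ij3: "i < j \<and> j < (3::nat) \<Longrightarrow> (i = 0 \<and> j = 1) \<or> (i = 0 \<and> j = 2) \<or> (i = 1 \<and> j = 2)"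
  by auto
lemma ij2: "i < j \<and> j < (2::nat) \<Longrightarrow> (i = 0 \<and> j = 1)"
  by auto

lemma graded_mono: "graded_cochain UNIV p z \<eta> \<Longrightarrow> graded_cochain S p z \<eta>"
  unfolding graded_cochain_def cochain_on_def by blast
lemma cocycle_mono: "is_cocycle B UNIV p \<eta> \<Longrightarrow> is_cocycle B S p \<eta>"
  unfolding is_cocycle_def by blast

context
  fixes B :: "'a::ab_group_add \<Rightarrow> 'a \<Rightarrow> int" and z :: 'a
  assumes bf: "bilinear_form B" and af: "alternating_form B" and kz: "z \<in> ker_mu B"
begin

lemma Bz1[simp]: "B z y = 0" using kz unfolding ker_mu_def by auto
lemma Bz2[simp]: "B y z = 0" using anti[OF bf af, of z y] by simp
lemma Bxx[simp]: "B x x = 0" using af unfolding alternating_form_def by auto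

lemmas bsimps = bil_ladd[OF bf] bil_radd[OF bf] bil_lneg[OF bf] bil_rneg[OF bf] bil_lsub[OF bf] bil_rsub[OF bf]
  bil_l0[OF bf] bil_r0[OF bf]

lemma omega_graded: "graded_cochain UNIV 3 z (omega B z)"
  unfolding graded_cochain_def cochain_on_def
proof (intro conjI allI impI)
  fix us :: "'a list" and i j :: nat
  assume h: "length us = 3 \<and> set us \<subseteq> UNIV" "i < j \<and> j < 3"
  then obtain a b c where us: "us = [a,b,c]" using len3 by blast
  show "omega B z (list_swap us i j) = - omega B z us"
  proof (cases "a + b + c = z")
    case True
    hence c: "c = z - a - b" by (simp add: algebra_simps)
    have s1: "B b a = - B a b" by (rule anti[OF bf af])
    show ?thesis using ij3[OF h(2)] True
      by (auto simp: us list_swap_def omega_def c bsimps s1 algebra_simps)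
  next
    case False
    show ?thesis using ij3[OF h(2)] False
      by (auto simp: us list_swap_def omega_def algebra_simps)
  qed
next
  fix us :: "'a list"
  assume "length us = 3 \<and> set us \<subseteq> UNIV \<and> sum_list us \<noteq> z"
  thus "omega B z us = 0" by (simp add: omega_def)
qed

lemma omega_cocycle: "is_cocycle B UNIV 3 (omega B z)"
  unfolding is_cocycle_def
proof (intro allI impI)
  fix us :: "'a list"
  assume "length us = Suc 3 \<and> set us \<subseteq> UNIV"
  then obtain a b c d where us: "us = [a,b,c,d]" using len4 by blast
  show "CE_d B (omega B z) us = 0"
  proof (cases "a + b + c + d = z")
    case True
    hence d: "d = z - a - b - c" by (simp add: algebra_simps)
    have s1: "B b a = - B a b" "B c a = - B a c" "B c b = - B b c" by (rule anti[OF bf af])+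
    show ?thesis unfolding us CE4 d
      by (simp add: omega_def bsimps s1 algebra_simps)
  next
    case False
    show ?thesis unfolding us CE4 using False
      by (simp add: omega_def algebra_simps)
  qed
qed

lemma B_nmul: "B (nmul n z) y = 0"
  by (induction n) (simp_all add: nmul_Suc bsimps)

lemma torsion_part:
  assumes tor: "torsion_elem z" and nz: "B \<noteq> (\<lambda>x y. 0)"
  shows "\<not> is_coboundary B UNIV 3 z (omega B z)"
proof
  assume "is_coboundary B UNIV 3 z (omega B z)"
  then obtain \<eta> where gc: "graded_cochain UNIV 2 z \<eta>"
    and cb: "\<And>us. length us = 3 \<Longrightarrow> CE_d B \<eta> us = omega B z us"
    unfolding is_coboundary_def by auto
  define f where "f x = \<eta> [x, z - x]" for x
  have alt: "\<eta> [b, a] = - \<eta> [a, b]" for a b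
  proof -
    have "\<eta> (list_swap [a,b] 0 1) = - \<eta> [a,b]"
      using gc unfolding graded_cochain_def cochain_on_def by simp
    thus ?thesis by (simp add: list_swap_def)
  qed
  have fneg: "f (z - x) = - f x" for x
    unfolding f_def using alt[of "z - x" x] by simp
  have fadd: "f (u + v) = f u + f v - 1" if k: "B u v \<noteq> 0" for u v
  proof -
    define w where "w = z - u - v"
    have "CE_d B \<eta> [u,v,w] = omega B z [u,v,w]" using cb by simp
    moreover have "omega B z [u,v,w] = of_int (B u v)" by (simp add: omega_def w_def algebra_simps)
    moreover have "\<eta> [u+v, w] = f (u+v)" by (simp add: f_def w_def algebra_simps)
    moreover have "\<eta> [u+w, v] = - f v"
    proof -
      have "u + w = z - v" by (simp add: w_def algebra_simps)
      thus ?thesis using fneg[of v] by (simp add: f_def)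
    qed
    moreover have "\<eta> [v+w, u] = - f u"
    proof -
      have "v + w = z - u" by (simp add: w_def algebra_simps)
      thus ?thesis using fneg[of u] by (simp add: f_def)
    qed
    moreover have "B u w = - B u v" "B v w = B u v"
      using anti[OF bf af, of u v] by (simp_all add: w_def bsimps)
    ultimately have "of_int (B u v) * (- f (u+v) + f u + f v - 1) = 0"
      unfolding CE3 by (simp add: algebra_simps)
    thus ?thesis using k by simp
  qed
  have fz: "f (x + z) = f x - 2" if k: "B x y \<noteq> 0" for x y
  proof -
    have e: "x + z = (x + y) + (z - y)" by (simp add: algebra_simps)
    have "B (x + y) (z - y) \<noteq> 0" using k by (simp add: bsimps)
    hence "f ((x + y) + (z - y)) = f (x + y) + f (z - y) - 1" by (rule fadd)
    hence "f (x + z) = f (x + y) + f (z - y) - 1" by (simp only: e)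
    thus ?thesis using fadd[OF k] fneg[of y] by simp
  qed
  obtain x y where xy: "B x y \<noteq> 0" using nz by blast
  have it: "f (x + nmul n z) = f x - 2 * of_nat n" for n
  proof (induction n)
    case 0 thus ?case by simp
  next
    case (Suc n)
    have "B (x + nmul n z) y \<noteq> 0" using xy by (simp add: bsimps B_nmul)
    hence "f ((x + nmul n z) + z) = f (x + nmul n z) - 2" by (rule fz)
    thus ?case using Suc by (simp add: nmul_Suc add.assoc algebra_simps)
  qed
  obtain n :: nat where n: "n > 0" "nmul n z = 0" using tor unfolding torsion_elem_def nmul_def by auto
  show False using it[of n] n by simp
qed

lemma nontorsion_part:
  assumes nt: "\<not> torsion_elem z"
  shows "is_coboundary B (H1 B) 3 z (omega B z)"
proof -
  obtain \<phi> :: "'a \<Rightarrow> rat" where pa: "\<And>x y. \<phi> (x + y) = \<phi> x + \<phi> y" and pz: "\<phi> z = 1"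
    using exists_hom[OF nt] by blast
  have p0: "\<phi> 0 = 0" using pa[of 0 0] by simp
  have pn: "\<phi> (-x) = - \<phi> x" for x using pa[of x "-x"] p0 by simp
  have ps: "\<phi> (x - y) = \<phi> x - \<phi> y" for x y using pa[of x "-y"] pn by simp
  define \<eta> where "\<eta> us = (if sum_list us = z then 1 - 2 * \<phi> (us ! 0) else 0)" for us
  have "graded_cochain UNIV 2 z \<eta>"
    unfolding graded_cochain_def cochain_on_def
  proof (intro conjI allI impI)
    fix us :: "'a list" and i j :: nat
    assume h: "length us = 2 \<and> set us \<subseteq> UNIV" "i < j \<and> j < 2"
    then obtain a b where us: "us = [a,b]" using len2 by blast
    have ij: "i = 0" "j = 1" using ij2[OF h(2)] by auto
    show "\<eta> (list_swap us i j) = - \<eta> us"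
    proof (cases "a + b = z")
      case True
      hence b: "b = z - a" by (simp add: algebra_simps)
      show ?thesis by (simp add: us ij list_swap_def \<eta>_def b ps pz algebra_simps)
    next
      case False
      thus ?thesis by (simp add: us ij list_swap_def \<eta>_def algebra_simps)
    qed
  next
    fix us :: "'a list"
    assume "length us = 2 \<and> set us \<subseteq> UNIV \<and> sum_list us \<noteq> z"
    thus "\<eta> us = 0" by (simp add: \<eta>_def)
  qed
  hence g: "graded_cochain (H1 B) (3 - 1) z \<eta>" using graded_mono by simp
  have "CE_d B \<eta> us = omega B z us" if lu: "length us = 3" for us
  proof -
    obtain a b c where us: "us = [a,b,c]" using len3[OF lu] by blast
    show ?thesis
    proof (cases "a + b + c = z")
      case True
      hence c: "c = z - a - b" by (simp add: algebra_simps)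
      have s1: "B b a = - B a b" by (rule anti[OF bf af])
      show ?thesis unfolding us CE3 c
        by (simp add: \<eta>_def omega_def bsimps s1 pa ps pz algebra_simps)
    next
      case False
      thus ?thesis unfolding us CE3 by (simp add: \<eta>_def omega_def algebra_simps)
    qed
  qed
  thus ?thesis unfolding is_coboundary_def using g by blast
qed

end

theorem theorem5p4:
  fixes B :: "'a::ab_group_add \<Rightarrow> 'a \<Rightarrow> int" and z :: 'a
  assumes "bilinear_form B" and "alternating_form B" and "B \<noteq> (\<lambda>x y. 0)"
    and "z \<in> ker_mu B"
  shows "graded_cochain UNIV 3 z (omega B z) \<and> is_cocycle B UNIV 3 (omega B z)
    \<and> graded_cochain (H1 B) 3 z (omega B z) \<and> is_cocycle B (H1 B) 3 (omega B z)
    \<and> (torsion_elem z \<longrightarrow> \<not> is_coboundary B UNIV 3 z (omega B z))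
    \<and> (\<not> torsion_elem z \<longrightarrow> is_coboundary B (H1 B) 3 z (omega B z))"
  using omega_graded[OF assms(1,2,4)] omega_cocycle[OF assms(1,2,4)]
    graded_mono[OF omega_graded[OF assms(1,2,4)]] cocycle_mono[OF omega_cocycle[OF assms(1,2,4)]]
    torsion_part[OF assms(1,2,4) _ assms(3)] nontorsion_part[OF assms(1,2,4)]
  by blast


end
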